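(* Let $(X,d)$ be a locally compact, geodesically complete CAT(0)-space connected at infinity, and let $d'$ be a metric on $X$ such that $(X,d')$ is a locally compact geodesically complete CAT(0)-space and, for all $x,y\in X$, $d(x,y)\le 1\iff d'(x,y)\le 1$. Then for every $n\in\mathbb N$ and all $x,y\in X$: $d(x,y)\le n\iff d'(x,y)\le n$, $d(x,y)=n\iff d'(x,y)=n$, and $d(x,y)<n\iff d'(x,y)<n$.
   Context: Geodesically complete: geodesic, and every geodesic segment lies in a complete geodesic. Connected at infinity: the complement of every metric ball is path connected. *)

theory Defs
  imports "HOL-Analysis.Analysis"
begin

text \<open>Metric notions for a distance function d on a carrier M (abstract metric spaces,
so that two different metrics on the same set can be handled).\<close>

definition geodesic_from :: "'a set \<Rightarrow> ('a \<Rightarrow> 'a \<Rightarrow> real) \<Rightarrow> (real \<Rightarrow> 'a) \<Rightarrow> 'a \<Rightarrow> 'a \<Rightarrow> bool" where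
  "geodesic_from M d g p q \<longleftrightarrow>
     g 0 = p \<and> g (d p q) = q \<and> g ` {0..d p q} \<subseteq> M \<and>
     (\<forall>s\<in>{0..d p q}. \<forall>t\<in>{0..d p q}. d (g s) (g t) = \<bar>s - t\<bar>)"

definition geodesic_metric :: "'a set \<Rightarrow> ('a \<Rightarrow> 'a \<Rightarrow> real) \<Rightarrow> bool" where
  "geodesic_metric M d \<longleftrightarrow> (\<forall>p\<in>M. \<forall>q\<in>M. \<exists>g. geodesic_from M d g p q)"

text \<open>Points of a side of a geodesic triangle paired with their comparison points
on the corresponding side [P,Q] of a comparison triangle in the Euclidean plane.\<close>
definition cmp_side :: "(real \<Rightarrow> 'a) \<Rightarrow> real \<Rightarrow> complex \<Rightarrow> complex \<Rightarrow> ('a \<times> complex) set" where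
  "cmp_side g L P Q = {(g s, P + of_real (s / L) * (Q - P)) | s. s \<in> {0..L}}"

definition CAT0 :: "'a set \<Rightarrow> ('a \<Rightarrow> 'a \<Rightarrow> real) \<Rightarrow> bool" where
  "CAT0 M d \<longleftrightarrow> geodesic_metric M d \<and>
     (\<forall>p\<in>M. \<forall>q\<in>M. \<forall>r\<in>M. \<forall>g1 g2 g3.
        geodesic_from M d g1 p q \<and> geodesic_from M d g2 q r \<and> geodesic_from M d g3 r p \<longrightarrow>
        (\<forall>P Q R :: complex. cmod (P - Q) = d p q \<and> cmod (Q - R) = d q r \<and> cmod (R - P) = d r p \<longrightarrow>
          (let S = cmp_side g1 (d p q) P Q \<union> cmp_side g2 (d q r) Q R \<union> cmp_side g3 (d r p) R P
           in \<forall>(x, x') \<in> S. \<forall>(y, y') \<in> S. d x y \<le> cmod (x' - y'))))"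

definition geodesically_complete :: "'a set \<Rightarrow> ('a \<Rightarrow> 'a \<Rightarrow> real) \<Rightarrow> bool" where
  "geodesically_complete M d \<longleftrightarrow> geodesic_metric M d \<and>
     (\<forall>g a b. a < b \<and> g ` {a..b} \<subseteq> M \<and> (\<forall>s\<in>{a..b}. \<forall>t\<in>{a..b}. d (g s) (g t) = \<bar>s - t\<bar>) \<longrightarrow>
        (\<exists>h. range h \<subseteq> M \<and> (\<forall>s t. d (h s) (h t) = \<bar>s - t\<bar>) \<and> (\<forall>s\<in>{a..b}. h s = g s)))"

definition connected_at_infinity :: "'a set \<Rightarrow> ('a \<Rightarrow> 'a \<Rightarrow> real) \<Rightarrow> bool" where
  "connected_at_infinity M d \<longleftrightarrow>
     (\<forall>x\<in>M. \<forall>r. path_connectedin (Metric_space.mtopology M d) (M - Metric_space.mball M d x r))"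

end

theory Submission
  imports Defs
begin

lemma geo_split:
  assumes "geodesic_metric UNIV d" "0 \<le> u" "u \<le> d x y"
  shows "\<exists>z. d x z = u \<and> d z y = d x y - u"
proof -
  obtain g where g: "geodesic_from UNIV d g x y"
    using assms(1) unfolding geodesic_metric_def by blast
  have iso: "\<And>s t. s \<in> {0..d x y} \<Longrightarrow> t \<in> {0..d x y} \<Longrightarrow> d (g s) (g t) = \<bar>s - t\<bar>"
    using g unfolding geodesic_from_def by blast
  have g0: "g 0 = x" and gD: "g (d x y) = y" using g unfolding geodesic_from_def by auto
  have "d x (g u) = u" using iso[of 0 u] assms g0 by auto
  moreover have "d (g u) y = d x y - u" using iso[of u "d x y"] assms gD by auto
  ultimately show ?thesis by blast
qed

lemma chain_le:
  assumes "Metric_space UNIV d" "geodesic_metric UNIV d"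
  shows "d x y \<le> real n + 1 \<longleftrightarrow> (\<exists>z. d x z \<le> 1 \<and> d z y \<le> real n)"
proof
  assume h: "d x y \<le> real n + 1"
  show "\<exists>z. d x z \<le> 1 \<and> d z y \<le> real n"
  proof (cases "d x y \<le> real n")
    case True
    have "d x x = 0" using Metric_space.zero[OF assms(1), of x x] by simp
    then show ?thesis using True by (intro exI[of _ x]) auto
  next
    case False
    then obtain z where "d x z = d x y - real n" "d z y = d x y - (d x y - real n)"
      using geo_split[OF assms(2), of "d x y - real n" x y] by auto
    then show ?thesis using h by (intro exI[of _ z]) auto
  qed
next
  assume "\<exists>z. d x z \<le> 1 \<and> d z y \<le> real n"
  then obtain z where "d x z \<le> 1" "d z y \<le> real n" by blast
  then show "d x y \<le> real n + 1"
    using Metric_space.triangle[OF assms(1), of x z y] by auto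
qed

lemma chain_lt:
  assumes "Metric_space UNIV d" "geodesic_metric UNIV d"
  shows "d x y < real n + 1 \<longleftrightarrow> (\<exists>z. d x z < 1 \<and> d z y \<le> real n)"
proof
  assume h: "d x y < real n + 1"
  show "\<exists>z. d x z < 1 \<and> d z y \<le> real n"
  proof (cases "d x y \<le> real n")
    case True
    have "d x x = 0" using Metric_space.zero[OF assms(1), of x x] by simp
    then show ?thesis using True by (intro exI[of _ x]) auto
  next
    case False
    then obtain z where "d x z = d x y - real n" "d z y = d x y - (d x y - real n)"
      using geo_split[OF assms(2), of "d x y - real n" x y] by auto
    then show ?thesis using h by (intro exI[of _ z]) auto
  qed
next
  assume "\<exists>z. d x z < 1 \<and> d z y \<le> real n"
  then obtain z where "d x z < 1" "d z y \<le> real n" by blast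
  then show "d x y < real n + 1"
    using Metric_space.triangle[OF assms(1), of x z y] by auto
qed

lemma le_equiv:
  assumes "Metric_space UNIV d" "geodesic_metric UNIV d"
    "Metric_space UNIV d'" "geodesic_metric UNIV d'"
    "\<forall>x y. d x y \<le> 1 \<longleftrightarrow> d' x y \<le> 1"
  shows "d x y \<le> real n \<longleftrightarrow> d' x y \<le> real n"
proof (induction n arbitrary: x)
  case 0
  have "d x y \<le> 0 \<longleftrightarrow> x = y"
    using Metric_space.zero[OF assms(1)] Metric_space.nonneg[OF assms(1), of x y] by force
  moreover have "d' x y \<le> 0 \<longleftrightarrow> x = y"
    using Metric_space.zero[OF assms(3)] Metric_space.nonneg[OF assms(3), of x y] by force
  ultimately show ?case by simp
next
  case (Suc n)
  have "d x y \<le> real (Suc n) \<longleftrightarrow> (\<exists>z. d x z \<le> 1 \<and> d z y \<le> real n)"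
    using chain_le[OF assms(1,2), of x y n] by (simp add: add.commute)
  also have "\<dots> \<longleftrightarrow> (\<exists>z. d' x z \<le> 1 \<and> d' z y \<le> real n)"
    by (simp add: Suc.IH assms(5)[rule_format])
  also have "\<dots> \<longleftrightarrow> d' x y \<le> real (Suc n)"
    using chain_le[OF assms(3,4), of x y n] by (simp add: add.commute)
  finally show ?case .
qed

lemma uniq_mid:
  assumes M: "Metric_space UNIV d" and C: "CAT0 UNIV d"
    and h: "d x y = 2" "d x z \<le> 1" "d z y \<le> 1"
    and g1: "geodesic_from UNIV d g1 x y"
  shows "z = g1 1"
proof -
  have gm: "geodesic_metric UNIV d" using C unfolding CAT0_def by (rule conjunct1)
  have tri: "d x y \<le> d x z + d z y" using Metric_space.triangle[OF M, of x z y] by simp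
  have xz: "d x z = 1" using h tri by linarith
  have zy: "d z y = 1" using h tri by linarith
  have yz: "d y z = 1" using Metric_space.commute[OF M, of y z] zy by simp
  have zx: "d z x = 1" using Metric_space.commute[OF M, of z x] xz by simp
  obtain g2 where g2: "geodesic_from UNIV d g2 y z" using gm unfolding geodesic_metric_def by blast
  obtain g3 where g3: "geodesic_from UNIV d g3 z x" using gm unfolding geodesic_metric_def by blast
  define P :: complex where "P = 0"
  define Q :: complex where "Q = 2"
  define R :: complex where "R = 1"
  have side: "cmod (P - Q) = d x y \<and> cmod (Q - R) = d y z \<and> cmod (R - P) = d z x"
    using h yz zx unfolding P_def Q_def R_def by simp
  define S where "S = cmp_side g1 (d x y) P Q \<union> cmp_side g2 (d y z) Q R \<union> cmp_side g3 (d z x) R P"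
  have c: "\<forall>p\<in>UNIV. \<forall>q\<in>UNIV. \<forall>r\<in>UNIV. \<forall>g1 g2 g3. geodesic_from UNIV d g1 p q \<and> geodesic_from UNIV d g2 q r \<and> geodesic_from UNIV d g3 r p \<longrightarrow>
        (\<forall>P Q R :: complex. cmod (P - Q) = d p q \<and> cmod (Q - R) = d q r \<and> cmod (R - P) = d r p \<longrightarrow>
          (let S = cmp_side g1 (d p q) P Q \<union> cmp_side g2 (d q r) Q R \<union> cmp_side g3 (d r p) R P
           in \<forall>(x, x') \<in> S. \<forall>(y, y') \<in> S. d x y \<le> cmod (x' - y')))"
    using C unfolding CAT0_def by (rule conjunct2)
  have "(let S = cmp_side g1 (d x y) P Q \<union> cmp_side g2 (d y z) Q R \<union> cmp_side g3 (d z x) R P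
           in \<forall>(x, x') \<in> S. \<forall>(y, y') \<in> S. d x y \<le> cmod (x' - y'))"
    using c[rule_format, OF UNIV_I UNIV_I UNIV_I conjI[OF g1 conjI[OF g2 g3]] side] .
  then have all: "\<forall>(a, a') \<in> S. \<forall>(b, b') \<in> S. d a b \<le> cmod (a' - b')"
    unfolding S_def Let_def .
  have m1: "(g1 1, 1) \<in> S"
  proof -
    have "(1::real) \<in> {0..d x y}" using h by simp
    then have "(g1 1, P + of_real (1 / d x y) * (Q - P)) \<in> cmp_side g1 (d x y) P Q"
      unfolding cmp_side_def by blast
    moreover have "P + of_real (1 / d x y) * (Q - P) = 1" using h unfolding P_def Q_def by simp
    ultimately show ?thesis unfolding S_def by simp
  qed
  have m2: "(z, 1) \<in> S"
  proof -
    have "d y z \<in> {0..d y z}" using yz by simp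
    then have "(g2 (d y z), Q + of_real (d y z / d y z) * (R - Q)) \<in> cmp_side g2 (d y z) Q R"
      unfolding cmp_side_def by blast
    moreover have "g2 (d y z) = z" using g2 unfolding geodesic_from_def by auto
    moreover have "Q + of_real (d y z / d y z) * (R - Q) = 1" using yz unfolding Q_def R_def by simp
    ultimately show ?thesis unfolding S_def by simp
  qed
  have a1: "\<forall>(b, b') \<in> S. d (g1 1) b \<le> cmod (1 - b')" using bspec[OF all m1] by (simp only: split_conv)
  have "d (g1 1) z \<le> cmod (1 - 1)" using bspec[OF a1 m2] by (simp only: split_conv)
  then have "d (g1 1) z = 0" using Metric_space.nonneg[OF M, of "g1 1" z] by simp
  then show "z = g1 1" using Metric_space.zero[OF M, of "g1 1" z] by simp
qed

lemma uniq_mid2: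
  assumes M: "Metric_space UNIV d" and C: "CAT0 UNIV d"
    and h: "d x y = 2" "d x z \<le> 1" "d z y \<le> 1" "d x w \<le> 1" "d w y \<le> 1"
  shows "z = w"
proof -
  have gm: "geodesic_metric UNIV d" using C unfolding CAT0_def by (rule conjunct1)
  obtain g where g: "geodesic_from UNIV d g x y" using gm unfolding geodesic_metric_def by blast
  show ?thesis using uniq_mid[OF M C h(1-3) g] uniq_mid[OF M C h(1,4,5) g] by simp
qed

lemma eq2:
  assumes M1: "Metric_space UNIV d" and C1: "CAT0 UNIV d"
    and M2: "Metric_space UNIV d'" and G2: "geodesic_metric UNIV d'"
    and hle: "\<forall>x y. d x y \<le> 1 \<longleftrightarrow> d' x y \<le> 1"
    and hle2: "d x y \<le> 2 \<longleftrightarrow> d' x y \<le> 2"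
    and h: "d x y = 2"
  shows "d' x y = 2"
proof (rule ccontr)
  assume ne: "d' x y \<noteq> 2"
  define t where "t = d' x y"
  have t2: "t < 2" using ne hle2 h unfolding t_def by auto
  have "x \<noteq> y"
  proof
    assume "x = y"
    then have "d x y = 0" using Metric_space.zero[OF M1, of x y] by simp
    then show False using h by simp
  qed
  then have "d' x y \<noteq> 0" using Metric_space.zero[OF M2, of x y] by simp
  then have t0: "t > 0" using Metric_space.nonneg[OF M2, of x y] unfolding t_def by linarith
  define \<delta> where "\<delta> = min t (2 - t) / 4"
  have dp: "\<delta> > 0" using t0 t2 unfolding \<delta>_def by auto
  have db1: "\<delta> \<le> t / 4" "\<delta> \<le> (2 - t) / 4" unfolding \<delta>_def by auto
  have db2: "4 * \<delta> \<le> t" "4 * \<delta> \<le> 2 - t" unfolding \<delta>_def by auto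
  obtain z1 where z1: "d' x z1 = t/2 - \<delta>" "d' z1 y = t - (t/2 - \<delta>)"
    using geo_split[OF G2, of "t/2 - \<delta>" x y] db1 dp t0 unfolding t_def by auto
  obtain z2 where z2: "d' x z2 = t/2 + \<delta>" "d' z2 y = t - (t/2 + \<delta>)"
    using geo_split[OF G2, of "t/2 + \<delta>" x y] db1 dp t0 unfolding t_def by auto
  have w0: "d' x z1 \<le> 1" using z1 db2 dp t2 t0 by linarith
  have w1: "d' z1 y \<le> 1" using z1 db2 dp t2 t0 by linarith
  have w2: "d' x z2 \<le> 1" using z2 db2 dp t2 t0 by linarith
  have w3: "d' z2 y \<le> 1" using z2 db2 dp t2 t0 by linarith
  have "d x z1 \<le> 1" "d z1 y \<le> 1" "d x z2 \<le> 1" "d z2 y \<le> 1"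
    using hle[rule_format, of x z1] hle[rule_format, of z1 y] hle[rule_format, of x z2]
      hle[rule_format, of z2 y] w0 w1 w2 w3 by simp_all
  then have "z1 = z2" by (rule uniq_mid2[OF M1 C1 h])
  then show False using z1 z2 dp by auto
qed

lemma eq1:
  assumes GC: "geodesically_complete UNIV d"
    and M2: "Metric_space UNIV d'"
    and hle: "\<forall>x y. d x y \<le> 1 \<longleftrightarrow> d' x y \<le> 1"
    and h2: "\<forall>x z. d x z = 2 \<longrightarrow> d' x z = 2"
    and h: "d x y = 1"
  shows "d' x y = 1"
proof -
  have gm: "geodesic_metric UNIV d" using GC unfolding geodesically_complete_def by (rule conjunct1)
  obtain g where g: "geodesic_from UNIV d g x y" using gm unfolding geodesic_metric_def by blast
  have iso: "\<forall>s\<in>{0..1}. \<forall>t\<in>{0..1}. d (g s) (g t) = \<bar>s - t\<bar>"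
    using g h unfolding geodesic_from_def by simp
  have g0: "g 0 = x" and g1: "g 1 = y" using g h unfolding geodesic_from_def by auto
  have ext: "\<forall>g a b. a < b \<and> g ` {a..b} \<subseteq> UNIV \<and> (\<forall>s\<in>{a..b}. \<forall>t\<in>{a..b}. d (g s) (g t) = \<bar>s - t\<bar>) \<longrightarrow>
        (\<exists>h. range h \<subseteq> UNIV \<and> (\<forall>s t. d (h s) (h t) = \<bar>s - t\<bar>) \<and> (\<forall>s\<in>{a..b}. h s = g s))"
    using GC unfolding geodesically_complete_def by (rule conjunct2)
  obtain hh where hh: "\<forall>s t. d (hh s) (hh t) = \<bar>s - t\<bar>" "\<forall>s\<in>{0..1::real}. hh s = g s"
    using ext[rule_format, of 0 1 g] iso by auto
  have hx: "hh 0 = x" "hh 1 = y" using hh(2) g0 g1 by auto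
  have "d x (hh 2) = 2" using hh(1)[rule_format, of 0 2] hx by simp
  then have a: "d' x (hh 2) = 2" by (rule h2[rule_format])
  have "d y (hh 2) = 1" using hh(1)[rule_format, of 1 2] hx by simp
  then have "d y (hh 2) \<le> 1" by simp
  then have b: "d' y (hh 2) \<le> 1" using hle[rule_format, of y "hh 2"] by simp
  have c: "d' x y \<le> 1" using hle[rule_format, of x y] h by simp
  have "d' x (hh 2) \<le> d' x y + d' y (hh 2)" using Metric_space.triangle[OF M2, of x y "hh 2"] by simp
  then show ?thesis using a b c by linarith
qed

theorem lemma1:
  fixes d d' :: "'a \<Rightarrow> 'a \<Rightarrow> real"
  assumes "Metric_space UNIV d"
    and "locally_compact_space (Metric_space.mtopology UNIV d)"
    and "geodesically_complete UNIV d"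
    and "CAT0 UNIV d"
    and "connected_at_infinity UNIV d"
    and "Metric_space UNIV d'"
    and "locally_compact_space (Metric_space.mtopology UNIV d')"
    and "geodesically_complete UNIV d'"
    and "CAT0 UNIV d'"
    and "\<forall>x y. d x y \<le> 1 \<longleftrightarrow> d' x y \<le> 1"
  shows "\<forall>n::nat. \<forall>x y.
           (d x y \<le> real n \<longleftrightarrow> d' x y \<le> real n) \<and>
           (d x y = real n \<longleftrightarrow> d' x y = real n) \<and>
           (d x y < real n \<longleftrightarrow> d' x y < real n)"
proof -
  have G1: "geodesic_metric UNIV d" using assms(4) unfolding CAT0_def by (rule conjunct1)
  have G2: "geodesic_metric UNIV d'" using assms(9) unfolding CAT0_def by (rule conjunct1)
  have hle': "\<forall>x y. d' x y \<le> 1 \<longleftrightarrow> d x y \<le> 1" using assms(10) by simp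
  have le: "\<And>n x y. d x y \<le> real n \<longleftrightarrow> d' x y \<le> real n"
    using le_equiv[OF assms(1) G1 assms(6) G2 assms(10)] by blast
  have le2: "\<And>x y. d x y \<le> 2 \<longleftrightarrow> d' x y \<le> 2" using le[of _ _ 2] by simp
  have e2: "\<forall>x y. d x y = 2 \<longrightarrow> d' x y = 2"
    using eq2[OF assms(1) assms(4) assms(6) G2 assms(10) le2] by blast
  have e2': "\<forall>x y. d' x y = 2 \<longrightarrow> d x y = 2"
    using eq2[OF assms(6) assms(9) assms(1) G1 hle'] le2 by metis
  have e1: "\<And>x y. d x y = 1 \<longleftrightarrow> d' x y = 1"
    using eq1[OF assms(3) assms(6) assms(10) e2] eq1[OF assms(8) assms(1) hle' e2'] by blast
  have lt1: "\<And>x y. d x y < 1 \<longleftrightarrow> d' x y < 1"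
  proof -
    have k1: "\<And>a::real. a < 1 \<longleftrightarrow> a \<le> 1 \<and> a \<noteq> 1" by auto
    show "d x y < 1 \<longleftrightarrow> d' x y < 1" for x y
      unfolding k1[of "d x y"] k1[of "d' x y"] using assms(10)[rule_format, of x y] e1[of x y] by simp
  qed
  have lt: "\<And>n x y. d x y < real n \<longleftrightarrow> d' x y < real n"
  proof -
    fix n x y
    show "d x y < real n \<longleftrightarrow> d' x y < real n"
    proof (cases n)
      case 0
      then show ?thesis using Metric_space.nonneg[OF assms(1), of x y] Metric_space.nonneg[OF assms(6), of x y]
        by simp
    next
      case (Suc m)
      have "d x y < real n \<longleftrightarrow> (\<exists>z. d x z < 1 \<and> d z y \<le> real m)"
        using chain_lt[OF assms(1) G1, of x y m] Suc by (simp add: add.commute)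
      also have "\<dots> \<longleftrightarrow> (\<exists>z. d' x z < 1 \<and> d' z y \<le> real m)"
        by (simp add: lt1 le)
      also have "\<dots> \<longleftrightarrow> d' x y < real n"
        using chain_lt[OF assms(6) G2, of x y m] Suc by (simp add: add.commute)
      finally show ?thesis .
    qed
  qed
  show ?thesis
  proof (intro allI conjI)
    fix n x y
    show "d x y \<le> real n \<longleftrightarrow> d' x y \<le> real n" by (rule le)
    show "d x y < real n \<longleftrightarrow> d' x y < real n" by (rule lt)
    show "d x y = real n \<longleftrightarrow> d' x y = real n"
    proof -
      have k: "\<And>a::real. (a = real n) \<longleftrightarrow> (a \<le> real n \<and> \<not> a < real n)" by auto
      show ?thesis unfolding k[of "d x y"] k[of "d' x y"] using le[of x y n] lt[of x y n] by simp
    qed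
  qed
qed

end
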